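(* There exist universal constants $C,C'>0$ such that for every $m>0$, every $\beta\in(0,1/3)$, every $\epsilon\in(0,1)$, every odd $n\in\mathbb{N}$ with $n\epsilon\ge C\ln(1/\beta)$, and every $D\in\mathcal{CTM}$, setting $\alpha^*=1/(n\epsilon)$, with probability at least $1-\beta$, $$\mathrm{FAIR}(D,\mathtt{DPExpMed}_{\alpha^*}(D))\le C'\frac{m}{n\epsilon}\ln\frac1\beta.$$
   Context: $V=[-m/2,m/2]$. A dataset is $D=(x_1,\dots,x_n)\in V^n$, indexed so that $x_1\le\dots\le x_n$, with median (optimal location) $\mathcal{T}(D)=x_{\lceil n/2\rceil}$. $\mathrm{FAIR}(D,\ell)=\max_{1\le i\le n}\left(|x_i-\ell|-|x_i-\mathcal{T}(D)|\right)$ (maximum individual utility loss when agent utilities are $-|x_i-\ell|$). $\mathcal{CTM}$ is the set of datasets with $|x_{i+1}-x_i|\ge|x_{j+1}-x_j|$ for all $1\le i<j\le\lceil n/2\rceil-1$ and $|x_i-x_{i-1}|\ge|x_j-x_{j-1}|$ for all $\lceil n/2\rceil+1\le j<i\le n$. The percentile loss $q(D,a)$ for $a\in V$ is: $\min\{|\lceil n/2\rceil-i|: a\in[x_i,\mathcal{T}(D)]\}$ if $a\in[x_1,\mathcal{T}(D)]$; $\min\{|\lceil n/2\rceil-i|: a\in[\mathcal{T}(D),x_i]\}$ if $a\in(\mathcal{T}(D),x_n]$; $\lceil n/2\rceil$ otherwise. The widened loss is $p_\alpha(D,\ell)=\min_{a\in V:|a-\ell|\le\alpha m}q(D,a)$.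 $\mathtt{DPExpMed}_\alpha(D)$ is the random point of $V$ with density proportional to $\exp(-\frac{\epsilon}{2}p_\alpha(D,\ell))$. *)

theory Defs
  imports "HOL-Analysis.Analysis"
begin

text \<open>A dataset of size n is a function x :: nat => real, used on indices 1..n,
  sorted increasingly, with entries in V = [-m/2, m/2].\<close>

definition Vset :: "real \<Rightarrow> real set" where
  "Vset m = {-m/2..m/2}"

definition is_dataset :: "real \<Rightarrow> nat \<Rightarrow> (nat \<Rightarrow> real) \<Rightarrow> bool" where
  "is_dataset m n x \<longleftrightarrow> (\<forall>i\<in>{1..n}. x i \<in> Vset m) \<and>
     (\<forall>i j. 1 \<le> i \<longrightarrow> i \<le> j \<longrightarrow> j \<le> n \<longrightarrow> x i \<le> x j)"

definition midx :: "nat \<Rightarrow> nat" where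
  "midx n = nat \<lceil>real n / 2\<rceil>"

definition Tmed :: "(nat \<Rightarrow> real) \<Rightarrow> nat \<Rightarrow> real" where
  "Tmed x n = x (midx n)"

definition FAIR :: "(nat \<Rightarrow> real) \<Rightarrow> nat \<Rightarrow> real \<Rightarrow> real" where
  "FAIR x n l = Max ((\<lambda>i. \<bar>x i - l\<bar> - \<bar>x i - Tmed x n\<bar>) ` {1..n})"

definition CTM :: "nat \<Rightarrow> (nat \<Rightarrow> real) \<Rightarrow> bool" where
  "CTM n x \<longleftrightarrow>
     (\<forall>i j. 1 \<le> i \<longrightarrow> i < j \<longrightarrow> j \<le> midx n - 1 \<longrightarrow> \<bar>x (i+1) - x i\<bar> \<ge> \<bar>x (j+1) - x j\<bar>) \<and>
     (\<forall>i j. midx n + 1 \<le> j \<longrightarrow> j < i \<longrightarrow> i \<le> n \<longrightarrow> \<bar>x i - x (i-1)\<bar> \<ge> \<bar>x j - x (j-1)\<bar>)"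

definition qloss :: "(nat \<Rightarrow> real) \<Rightarrow> nat \<Rightarrow> real \<Rightarrow> real" where
  "qloss x n a =
    (if x 1 \<le> a \<and> a \<le> Tmed x n then
       Min {\<bar>real (midx n) - real i\<bar> | i. i \<in> {1..n} \<and> x i \<le> a \<and> a \<le> Tmed x n}
     else if Tmed x n < a \<and> a \<le> x n then
       Min {\<bar>real (midx n) - real i\<bar> | i. i \<in> {1..n} \<and> Tmed x n \<le> a \<and> a \<le> x i}
     else real (midx n))"

definition ploss :: "real \<Rightarrow> real \<Rightarrow> (nat \<Rightarrow> real) \<Rightarrow> nat \<Rightarrow> real \<Rightarrow> real" where
  "ploss m \<alpha> x n l = Inf (qloss x n ` {a \<in> Vset m. \<bar>a - l\<bar> \<le> \<alpha> * m})"

definition expmed_measure :: "real \<Rightarrow> real \<Rightarrow> real \<Rightarrow> (nat \<Rightarrow> real) \<Rightarrow> nat \<Rightarrow> real measure" where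
  "expmed_measure m \<alpha> \<epsilon> x n =
     density lborel (\<lambda>l. ennreal (indicator (Vset m) l * exp (- (\<epsilon> / 2) * ploss m \<alpha> x n l)))"

text \<open>Probability that DPExpMed_alpha(D) lies in S.\<close>
definition dpexpmed_prob :: "real \<Rightarrow> real \<Rightarrow> real \<Rightarrow> (nat \<Rightarrow> real) \<Rightarrow> nat \<Rightarrow> real set \<Rightarrow> real" where
  "dpexpmed_prob m \<alpha> \<epsilon> x n S =
     measure (expmed_measure m \<alpha> \<epsilon> x n) S / measure (expmed_measure m \<alpha> \<epsilon> x n) (Vset m)"

end

theory Submission
  imports Defs
begin

lemma gap_aux:
  fixes y :: "nat \<Rightarrow> real"
  assumes y0: "y 0 = 0"
    and inc: "\<And>s s'. s \<le> s' \<Longrightarrow> s' < N \<Longrightarrow> y (Suc s) - y s \<le> y (Suc s') - y s'"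
  shows "j \<le> K \<Longrightarrow> K < N \<Longrightarrow> y j \<le> real j * (y (Suc K) - y K)"
proof (induction j)
  case 0 then show ?case using y0 by simp
next
  case (Suc j)
  then have "y j \<le> real j * (y (Suc K) - y K)" by simp
  moreover have "y (Suc j) - y j \<le> y (Suc K) - y K" using inc Suc.prems by simp
  ultimately show ?case by (simp add: algebra_simps)
qed

lemma gap_convex:
  fixes y :: "nat \<Rightarrow> real"
  assumes y0: "y 0 = 0"
    and inc: "\<And>s s'. s \<le> s' \<Longrightarrow> s' < N \<Longrightarrow> y (Suc s) - y s \<le> y (Suc s') - y s'"
    and jK: "j \<le> K" and KN: "K \<le> N"
  shows "real K * y j \<le> real j * y K"
proof -
  have "\<forall>d. j + d \<le> N \<longrightarrow> real (j+d) * y j \<le> real j * y (j+d)"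
  proof
    fix d show "j + d \<le> N \<longrightarrow> real (j+d) * y j \<le> real j * y (j+d)"
    proof (induction d)
      case 0 then show ?case by simp
    next
      case (Suc d)
      show ?case
      proof
        assume h: "j + Suc d \<le> N"
        then have IH: "real (j+d) * y j \<le> real j * y (j+d)" using Suc by simp
        have "y j \<le> real j * (y (Suc (j+d)) - y (j+d))"
          by (rule gap_aux[where N=N, OF y0 inc]) (use h in simp_all)
        then show "real (j + Suc d) * y j \<le> real j * y (j + Suc d)"
          using IH by (simp add: algebra_simps)
      qed
    qed
  qed
  then show ?thesis using jK KN by (metis le_add_diff_inverse)
qed

lemma midx_odd:
  assumes "odd n" shows "n = 2 * midx n - 1" "midx n \<ge> 1"
proof -
  obtain t where t: "n = 2*t+1" using assms oddE by blast
  have "\<lceil>real n / 2\<rceil> = int t + 1"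
    unfolding t by (intro ceiling_unique) auto
  then have "midx n = t + 1" unfolding midx_def by simp
  then show "n = 2 * midx n - 1" "midx n \<ge> 1" using t by auto
qed

lemma sorted_le:
  assumes "is_dataset m n x" "1 \<le> i" "i \<le> j" "j \<le> n" shows "x i \<le> x j"
  using assms unfolding is_dataset_def by blast

lemma in_V:
  assumes "is_dataset m n x" "1 \<le> i" "i \<le> n" shows "x i \<in> Vset m"
  using assms unfolding is_dataset_def by auto

lemma gap_left:
  assumes ds: "is_dataset m n x" and ctm: "CTM n x" and od: "odd n" and j: "j \<le> midx n - 1"
  shows "real (midx n - 1) * (x (midx n) - x (midx n - j)) \<le> real j * m"
proof -
  define k where "k = midx n"
  have nk: "n = 2*k - 1" "k \<ge> 1" using midx_odd[OF od] k_def by auto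
  define y where "y s = x k - x (k - s)" for s
  have y0: "y 0 = 0" by (simp add: y_def)
  have inc: "y (Suc s) - y s \<le> y (Suc s') - y s'" if "s \<le> s'" "s' < k - 1" for s s'
  proof (cases "s = s'")
    case True then show ?thesis by simp
  next
    case False
    have c: "\<bar>x (i+1) - x i\<bar> \<ge> \<bar>x (j+1) - x j\<bar>" if "1 \<le> i" "i < j" "j \<le> k - 1" for i j
      using ctm that unfolding CTM_def k_def by blast
    have e: "k - s' - 1 + 1 = k - s'" "k - s - 1 + 1 = k - s" using that by auto
    have "\<bar>x (k - s' - 1 + 1) - x (k - s' - 1)\<bar> \<ge> \<bar>x (k - s - 1 + 1) - x (k - s - 1)\<bar>"
      using c[of "k - s' - 1" "k - s - 1"] that False by auto
    then have a: "\<bar>x (k - s') - x (k - s' - 1)\<bar> \<ge> \<bar>x (k - s) - x (k - s - 1)\<bar>"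
      by (simp only: e)
    have "x (k - s' - 1) \<le> x (k - s')" "x (k - s - 1) \<le> x (k - s)"
      using sorted_le[OF ds] that nk by auto
    with a have ineq: "x (k - s) - x (k - s - 1) \<le> x (k - s') - x (k - s' - 1)"
      by linarith
    have "k - Suc s = k - s - 1" "k - Suc s' = k - s' - 1" by auto
    then have "y (Suc s) - y s = x (k - s) - x (k - s - 1)"
      "y (Suc s') - y s' = x (k - s') - x (k - s' - 1)"
      unfolding y_def by simp_all
    with ineq show ?thesis by simp
  qed
  have "real (k - 1) * y j \<le> real j * y (k - 1)"
    by (rule gap_convex[OF y0 inc]) (use j k_def in auto)
  moreover have "y (k - 1) \<le> m"
  proof -
    have "x 1 \<in> Vset m" by (rule in_V[OF ds]) (use nk in simp_all)
    moreover have "x k \<in> Vset m" by (rule in_V[OF ds]) (use nk in simp_all)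
    moreover have "k - (k - 1) = 1" using nk by simp
    then have "y (k - 1) = x k - x 1" by (simp add: y_def)
    ultimately show ?thesis unfolding Vset_def by simp
  qed
  moreover have "y j \<ge> 0"
  proof -
    have "x (k - j) \<le> x k" by (rule sorted_le[OF ds]) (use nk j k_def in simp_all)
    then show ?thesis by (simp add: y_def)
  qed
  ultimately have "real (k - 1) * y j \<le> real j * m"
    by (meson mult_left_mono of_nat_0_le_iff order_trans)
  then show ?thesis unfolding y_def k_def .
qed

lemma gap_right:
  assumes ds: "is_dataset m n x" and ctm: "CTM n x" and od: "odd n" and j: "j \<le> midx n - 1"
  shows "real (midx n - 1) * (x (midx n + j) - x (midx n)) \<le> real j * m"
proof -
  define k where "k = midx n"
  have nk: "n = 2*k - 1" "k \<ge> 1" using midx_odd[OF od] k_def by auto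
  define y where "y s = x (k + s) - x k" for s
  have y0: "y 0 = 0" by (simp add: y_def)
  have inc: "y (Suc s) - y s \<le> y (Suc s') - y s'" if "s \<le> s'" "s' < k - 1" for s s'
  proof (cases "s = s'")
    case True then show ?thesis by simp
  next
    case False
    have c: "\<bar>x i - x (i - 1)\<bar> \<ge> \<bar>x j - x (j - 1)\<bar>" if "k + 1 \<le> j" "j < i" "i \<le> n" for i j
      using ctm that unfolding CTM_def k_def by blast
    have e: "k + s' + 1 - 1 = k + s'" "k + s + 1 - 1 = k + s" by auto
    have "\<bar>x (k + s' + 1) - x (k + s' + 1 - 1)\<bar> \<ge> \<bar>x (k + s + 1) - x (k + s + 1 - 1)\<bar>"
      using c[of "k + s + 1" "k + s' + 1"] that False nk by auto
    then have a: "\<bar>x (k + s' + 1) - x (k + s')\<bar> \<ge> \<bar>x (k + s + 1) - x (k + s)\<bar>"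
      by (simp only: e)
    have "x (k + s') \<le> x (k + s' + 1)" by (rule sorted_le[OF ds]) (use that nk in simp_all)
    moreover have "x (k + s) \<le> x (k + s + 1)" by (rule sorted_le[OF ds]) (use that nk in simp_all)
    ultimately have ineq: "x (k + s + 1) - x (k + s) \<le> x (k + s' + 1) - x (k + s')"
      using a by linarith
    have "y (Suc s) - y s = x (k + s + 1) - x (k + s)"
      "y (Suc s') - y s' = x (k + s' + 1) - x (k + s')"
      unfolding y_def by simp_all
    with ineq show ?thesis by simp
  qed
  have "real (k - 1) * y j \<le> real j * y (k - 1)"
    by (rule gap_convex[OF y0 inc]) (use j k_def in auto)
  moreover have "y (k - 1) \<le> m"
  proof -
    have "x n \<in> Vset m" by (rule in_V[OF ds]) (use nk in simp_all)
    moreover have "x k \<in> Vset m" by (rule in_V[OF ds]) (use nk in simp_all)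
    moreover have "k + (k - 1) = n" using nk by simp
    then have "y (k - 1) = x n - x k" by (simp add: y_def)
    ultimately show ?thesis unfolding Vset_def by simp
  qed
  moreover have "y j \<ge> 0"
  proof -
    have "x k \<le> x (k + j)" by (rule sorted_le[OF ds]) (use nk j k_def in simp_all)
    then show ?thesis by (simp add: y_def)
  qed
  ultimately have "real (k - 1) * y j \<le> real j * m"
    by (meson mult_left_mono of_nat_0_le_iff order_trans)
  then show ?thesis unfolding y_def k_def .
qed

lemma gap_bound:
  assumes ds: "is_dataset m n x" and ctm: "CTM n x" and od: "odd n" and i: "1 \<le> i" "i \<le> n"
  shows "real (midx n - 1) * \<bar>x i - Tmed x n\<bar> \<le> \<bar>real (midx n) - real i\<bar> * m"
proof -
  obtain k where km: "midx n = k" by blast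
  have nk: "n = 2*k - 1" "k \<ge> 1" using midx_odd[OF od] km by auto
  have T: "Tmed x n = x k" by (simp add: Tmed_def km)
  show ?thesis
  proof (cases "i \<le> k")
    case True
    have "k - i \<le> midx n - 1" using i True km by simp
    from gap_left[OF ds ctm od this]
    have "real (k - 1) * (x k - x (k - (k - i))) \<le> real (k - i) * m" by (simp only: km)
    moreover have "k - (k - i) = i" using True by simp
    moreover have "x i \<le> x k" by (rule sorted_le[OF ds]) (use True i nk in simp_all)
    moreover have "\<bar>real k - real i\<bar> = real (k - i)" using True by (simp add: of_nat_diff)
    ultimately show ?thesis unfolding T km by simp
  next
    case False
    have "i - k \<le> midx n - 1" using i False nk km by simp
    from gap_right[OF ds ctm od this]
    have "real (k - 1) * (x (k + (i - k)) - x k) \<le> real (i - k) * m" by (simp only: km)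
    moreover have "k + (i - k) = i" using False by simp
    moreover have "x k \<le> x i" by (rule sorted_le[OF ds]) (use False i nk in simp_all)
    moreover have "\<bar>real k - real i\<bar> = real (i - k)" using False by (simp add: of_nat_diff)
    ultimately show ?thesis unfolding T km by simp
  qed
qed

lemma absdiff_nat:
  assumes "n = 2*k - 1" "1 \<le> i" "i \<le> n"
  shows "\<exists>N\<le>k. \<bar>real k - real i\<bar> = real N"
proof (cases "i \<le> k")
  case True then show ?thesis by (intro exI[of _ "k - i"]) (auto simp: of_nat_diff)
next
  case False then show ?thesis using assms by (intro exI[of _ "i - k"]) (auto simp: of_nat_diff)
qed

lemma q_facts:
  assumes ds: "is_dataset m n x" and od: "odd n"
  shows "qloss x n a \<le> t \<longleftrightarrow> (real (midx n) \<le> t \<or> (\<exists>i\<in>{1..n}. \<bar>real (midx n) - real i\<bar> \<le> t \<and>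
            ((x i \<le> a \<and> a \<le> Tmed x n) \<or> (Tmed x n \<le> a \<and> a \<le> x i))))"
    and "\<exists>N\<le>midx n. qloss x n a = real N"
proof -
  obtain k where km: "midx n = k" by blast
  have nk: "n = 2*k - 1" "k \<ge> 1" using midx_odd[OF od] km by auto
  define T where "T = Tmed x n"
  have T: "T = x k" by (simp add: T_def Tmed_def km)
  have x1T: "x 1 \<le> T" unfolding T by (rule sorted_le[OF ds]) (use nk in simp_all)
  have Txn: "T \<le> x n" unfolding T by (rule sorted_le[OF ds]) (use nk in simp_all)
  have srt: "\<And>i j. 1 \<le> i \<Longrightarrow> i \<le> j \<Longrightarrow> j \<le> n \<Longrightarrow> x i \<le> x j" using sorted_le[OF ds] by blast
  define RHS where "RHS = (real k \<le> t \<or> (\<exists>i\<in>{1..n}. \<bar>real k - real i\<bar> \<le> t \<and>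
            ((x i \<le> a \<and> a \<le> T) \<or> (T \<le> a \<and> a \<le> x i))))"
  have "(qloss x n a \<le> t \<longleftrightarrow> RHS) \<and> (\<exists>N\<le>k. qloss x n a = real N)"
  proof (cases "x 1 \<le> a \<and> a \<le> T")
    case c1: True
    define S where "S = {\<bar>real k - real i\<bar> | i. i \<in> {1..n} \<and> x i \<le> a \<and> a \<le> T}"
    have q: "qloss x n a = Min S" using c1 unfolding qloss_def S_def T_def km by simp
    have fin: "finite S" unfolding S_def by simp
    have "1 \<in> {1..n}" using nk by simp
    then have ne: "\<bar>real k - real 1\<bar> \<in> S" unfolding S_def using c1 by blast
    then have ne': "S \<noteq> {}" by blast
    have val: "\<exists>N\<le>k. qloss x n a = real N"
    proof -
      have "Min S \<in> S" using fin ne' by (rule Min_in)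
      then obtain i where "i \<in> {1..n}" "Min S = \<bar>real k - real i\<bar>" unfolding S_def by blast
      then show ?thesis using absdiff_nat[OF nk(1)] q by auto
    qed
    have "qloss x n a \<le> t \<longleftrightarrow> (\<exists>s\<in>S. s \<le> t)" unfolding q using fin ne' by (rule Min_le_iff)
    also have "\<dots> \<longleftrightarrow> RHS"
    proof
      assume "\<exists>s\<in>S. s \<le> t" then show RHS unfolding S_def RHS_def by blast
    next
      assume R: RHS
      show "\<exists>s\<in>S. s \<le> t"
      proof (cases "real k \<le> t")
        case True then show ?thesis using ne nk by (intro bexI[OF _ ne]) auto
      next
        case False
        then obtain i where i: "i \<in> {1..n}" "\<bar>real k - real i\<bar> \<le> t"
          "(x i \<le> a \<and> a \<le> T) \<or> (T \<le> a \<and> a \<le> x i)" using R unfolding RHS_def by blast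
        show ?thesis
        proof (cases "x i \<le> a \<and> a \<le> T")
          case True then show ?thesis using i unfolding S_def by blast
        next
          case False
          then have "a = T" using i c1 by auto
          then have "\<bar>real k - real k\<bar> \<in> S" unfolding S_def using nk T by auto
          moreover have "\<bar>real k - real k\<bar> \<le> t" using i(2) by simp
          ultimately show ?thesis by blast
        qed
      qed
    qed
    finally show ?thesis using val by blast
  next
    case nc1: False
    show ?thesis
    proof (cases "T < a \<and> a \<le> x n")
      case c2: True
      define S where "S = {\<bar>real k - real i\<bar> | i. i \<in> {1..n} \<and> T \<le> a \<and> a \<le> x i}"
      have q: "qloss x n a = Min S" using c2 nc1 unfolding qloss_def S_def T_def km by simp
      have fin: "finite S" unfolding S_def by simp
      have "n \<in> {1..n}" using nk by simp
      moreover have "T \<le> a" using c2 by simp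
      ultimately have ne: "\<bar>real k - real n\<bar> \<in> S" unfolding S_def using c2 by blast
      then have ne': "S \<noteq> {}" by blast
      have val: "\<exists>N\<le>k. qloss x n a = real N"
      proof -
        have "Min S \<in> S" using fin ne' by (rule Min_in)
        then obtain i where "i \<in> {1..n}" "Min S = \<bar>real k - real i\<bar>" unfolding S_def by blast
        then show ?thesis using absdiff_nat[OF nk(1)] q by auto
      qed
      have "qloss x n a \<le> t \<longleftrightarrow> (\<exists>s\<in>S. s \<le> t)" unfolding q using fin ne' by (rule Min_le_iff)
      also have "\<dots> \<longleftrightarrow> RHS"
      proof
        assume "\<exists>s\<in>S. s \<le> t" then show RHS unfolding S_def RHS_def by blast
      next
        assume R: RHS
        show "\<exists>s\<in>S. s \<le> t"
        proof (cases "real k \<le> t")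
          case True
          have "\<bar>real k - real n\<bar> \<le> real k" using nk by auto
          then show ?thesis using True by (intro bexI[OF _ ne]) auto
        next
          case False
          then obtain i where i: "i \<in> {1..n}" "\<bar>real k - real i\<bar> \<le> t"
            "(x i \<le> a \<and> a \<le> T) \<or> (T \<le> a \<and> a \<le> x i)" using R unfolding RHS_def by blast
          then have "T \<le> a \<and> a \<le> x i" using c2 by auto
          then show ?thesis using i unfolding S_def by blast
        qed
      qed
      finally show ?thesis using val by blast
    next
      case nc2: False
      have q: "qloss x n a = real k" using nc1 nc2 unfolding qloss_def T_def km by auto
      have "\<not> (\<exists>i\<in>{1..n}. (x i \<le> a \<and> a \<le> T) \<or> (T \<le> a \<and> a \<le> x i))"
      proof
        assume "\<exists>i\<in>{1..n}. (x i \<le> a \<and> a \<le> T) \<or> (T \<le> a \<and> a \<le> x i)"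
        then obtain i where i: "1 \<le> i" "i \<le> n" "(x i \<le> a \<and> a \<le> T) \<or> (T \<le> a \<and> a \<le> x i)" by auto
        have "x 1 \<le> x i" "x i \<le> x n" using srt[of 1 i] srt[of i n] i by auto
        then show False using i(3) nc1 nc2 x1T by auto
      qed
      then show ?thesis unfolding RHS_def q by auto
    qed
  qed
  then have H1: "qloss x n a \<le> t \<longleftrightarrow> RHS" and H2: "\<exists>N\<le>k. qloss x n a = real N" by blast+
  show "qloss x n a \<le> t \<longleftrightarrow> (real (midx n) \<le> t \<or> (\<exists>i\<in>{1..n}. \<bar>real (midx n) - real i\<bar> \<le> t \<and>
            ((x i \<le> a \<and> a \<le> Tmed x n) \<or> (Tmed x n \<le> a \<and> a \<le> x i))))"
    unfolding km using H1 unfolding RHS_def T_def .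
  show "\<exists>N\<le>midx n. qloss x n a = real N" unfolding km by (rule H2)
qed

lemma p_facts:
  assumes ds: "is_dataset m n x" and od: "odd n" and l: "l \<in> Vset m" and r: "\<alpha> * m \<ge> 0"
  shows "\<exists>a. a \<in> Vset m \<and> \<bar>a - l\<bar> \<le> \<alpha> * m \<and> ploss m \<alpha> x n l = qloss x n a"
    and "\<And>a. a \<in> Vset m \<Longrightarrow> \<bar>a - l\<bar> \<le> \<alpha> * m \<Longrightarrow> ploss m \<alpha> x n l \<le> qloss x n a"
proof -
  define W where "W = {a \<in> Vset m. \<bar>a - l\<bar> \<le> \<alpha> * m}"
  have lW: "l \<in> W" using l r by (simp add: W_def)
  have sub: "qloss x n ` W \<subseteq> real ` {..midx n}"
    using q_facts(2)[OF ds od] by blast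
  have fin: "finite (qloss x n ` W)" by (rule finite_subset[OF sub]) simp
  have ne: "qloss x n ` W \<noteq> {}" using lW by blast
  have p: "ploss m \<alpha> x n l = Min (qloss x n ` W)"
    unfolding ploss_def W_def[symmetric] by (rule cInf_eq_Min[OF fin ne])
  have "Min (qloss x n ` W) \<in> qloss x n ` W" by (rule Min_in[OF fin ne])
  then show "\<exists>a. a \<in> Vset m \<and> \<bar>a - l\<bar> \<le> \<alpha> * m \<and> ploss m \<alpha> x n l = qloss x n a"
    unfolding p W_def by blast
  fix a assume "a \<in> Vset m" "\<bar>a - l\<bar> \<le> \<alpha> * m"
  then have "a \<in> W" by (simp add: W_def)
  then show "ploss m \<alpha> x n l \<le> qloss x n a" unfolding p using fin by simp
qed

lemma p_le_iff:
  assumes ds: "is_dataset m n x" and od: "odd n" and l: "l \<in> Vset m" and r: "\<alpha> * m \<ge> 0"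
  shows "ploss m \<alpha> x n l \<le> t \<longleftrightarrow> (\<exists>a\<in>Vset m. \<bar>a - l\<bar> \<le> \<alpha> * m \<and> qloss x n a \<le> t)"
proof
  assume "ploss m \<alpha> x n l \<le> t"
  then show "\<exists>a\<in>Vset m. \<bar>a - l\<bar> \<le> \<alpha> * m \<and> qloss x n a \<le> t"
    using p_facts(1)[OF ds od l r] by force
next
  assume "\<exists>a\<in>Vset m. \<bar>a - l\<bar> \<le> \<alpha> * m \<and> qloss x n a \<le> t"
  then obtain a where "a \<in> Vset m" "\<bar>a - l\<bar> \<le> \<alpha> * m" "qloss x n a \<le> t" by blast
  then show "ploss m \<alpha> x n l \<le> t" using p_facts(2)[OF ds od l r] by force
qed

lemma p_val:
  assumes ds: "is_dataset m n x" and od: "odd n" and l: "l \<in> Vset m" and r: "\<alpha> * m \<ge> 0"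
  shows "\<exists>N\<le>midx n. ploss m \<alpha> x n l = real N"
  using p_facts(1)[OF ds od l r] q_facts(2)[OF ds od] by metis

lemma q_closed:
  assumes ds: "is_dataset m n x" and od: "odd n"
  shows "closed {a. qloss x n a \<le> t}"
proof -
  have "{a. qloss x n a \<le> t} = {a. real (midx n) \<le> t} \<union>
     (\<Union>i\<in>{i\<in>{1..n}. \<bar>real (midx n) - real i\<bar> \<le> t}. {x i..Tmed x n} \<union> {Tmed x n..x i})"
    using q_facts(1)[OF ds od] by auto
  moreover have "closed {a::real. real (midx n) \<le> t}" by (cases "real (midx n) \<le> t") auto
  ultimately show ?thesis by (auto intro!: closed_Un closed_UN)
qed

lemma S_closed:
  assumes ds: "is_dataset m n x" and od: "odd n" and r: "\<alpha> * m \<ge> 0"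
  shows "closed {l. \<exists>a\<in>Vset m. \<bar>a - l\<bar> \<le> \<alpha> * m \<and> qloss x n a \<le> t}"
proof -
  define A where "A = Vset m \<inter> {a. qloss x n a \<le> t}"
  have cA: "compact A" unfolding A_def Vset_def
    by (intro compact_Int_closed compact_Icc q_closed[OF ds od])
  have "closed (\<Union>u\<in>cball 0 (\<alpha> * m). \<Union>v\<in>A. {u + v})"
    by (rule closed_compact_sums[OF closed_cball cA])
  moreover have "(\<Union>u\<in>cball 0 (\<alpha> * m). \<Union>v\<in>A. {u + v}) =
      {l. \<exists>a\<in>Vset m. \<bar>a - l\<bar> \<le> \<alpha> * m \<and> qloss x n a \<le> t}"
  proof (intro set_eqI iffI)
    fix l assume "l \<in> (\<Union>u\<in>cball 0 (\<alpha> * m). \<Union>v\<in>A. {u + v})"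
    then obtain u v where "u \<in> cball 0 (\<alpha> * m)" "v \<in> A" "l = u + v" by blast
    then show "l \<in> {l. \<exists>a\<in>Vset m. \<bar>a - l\<bar> \<le> \<alpha> * m \<and> qloss x n a \<le> t}"
      unfolding A_def by (intro CollectI bexI[of _ v]) (auto simp: dist_real_def)
  next
    fix l assume "l \<in> {l. \<exists>a\<in>Vset m. \<bar>a - l\<bar> \<le> \<alpha> * m \<and> qloss x n a \<le> t}"
    then obtain a where "a \<in> Vset m" "\<bar>a - l\<bar> \<le> \<alpha> * m" "qloss x n a \<le> t" by blast
    then have "l - a \<in> cball 0 (\<alpha> * m)" "a \<in> A" "l = (l - a) + a"
      unfolding A_def by (auto simp: dist_real_def)
    then show "l \<in> (\<Union>u\<in>cball 0 (\<alpha> * m). \<Union>v\<in>A. {u + v})" by blast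
  qed
  ultimately show ?thesis by simp
qed

definition Sset :: "real \<Rightarrow> real \<Rightarrow> (nat \<Rightarrow> real) \<Rightarrow> nat \<Rightarrow> nat \<Rightarrow> real set" where
  "Sset m \<alpha> x n j = {l. \<exists>a\<in>Vset m. \<bar>a - l\<bar> \<le> \<alpha> * m \<and> qloss x n a \<le> real j}"

lemma dens_eq:
  fixes \<epsilon> :: real
  assumes ds: "is_dataset m n x" and od: "odd n" and r: "\<alpha> * m \<ge> 0"
  shows "indicator (Vset m) l * exp (- (\<epsilon> / 2) * ploss m \<alpha> x n l) =
    indicator (Vset m) l * exp (- (\<epsilon> / 2) * (\<Sum>j<midx n. indicator (- Sset m \<alpha> x n j) l))"
proof (cases "l \<in> Vset m")
  case False then show ?thesis by simp
next
  case l: True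
  obtain N where N: "N \<le> midx n" "ploss m \<alpha> x n l = real N" using p_val[OF ds od l r] by blast
  have "\<And>j. l \<in> Sset m \<alpha> x n j \<longleftrightarrow> ploss m \<alpha> x n l \<le> real j"
    unfolding Sset_def using p_le_iff[OF ds od l r] by simp
  then have ind: "\<And>j. indicator (- Sset m \<alpha> x n j) l = (if j < N then 1 else (0::real))"
    using N(2) by (auto simp: indicator_def)
  have "(\<Sum>j<midx n. indicator (- Sset m \<alpha> x n j) l) = (\<Sum>j<midx n. if j < N then 1 else (0::real))"
    using ind by simp
  also have "\<dots> = real (card {j. j < midx n \<and> j < N})"
    by (simp add: sum.If_cases Int_def)
  also have "{j. j < midx n \<and> j < N} = {..<N}" using N(1) by auto
  finally have "(\<Sum>j<midx n. indicator (- Sset m \<alpha> x n j) l) = real N" by simp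
  then show ?thesis using N(2) by simp
qed

lemma dens_meas:
  fixes \<epsilon> :: real
  assumes ds: "is_dataset m n x" and od: "odd n" and r: "\<alpha> * m \<ge> 0"
  shows "(\<lambda>l. indicator (Vset m) l * exp (- (\<epsilon> / 2) * (\<Sum>j<midx n. indicator (- Sset m \<alpha> x n j) l)))
     \<in> borel_measurable borel"
proof -
  have "\<And>j. Sset m \<alpha> x n j \<in> sets borel"
    unfolding Sset_def by (rule borel_closed[OF S_closed[OF ds od r]])
  then have "\<And>j. - Sset m \<alpha> x n j \<in> sets borel" by (simp add: borel_comp)
  moreover have "Vset m \<in> sets borel" by (simp add: Vset_def)
  ultimately show ?thesis by measurable
qed

lemma T_in_V:
  assumes ds: "is_dataset m n x" and od: "odd n" shows "Tmed x n \<in> Vset m"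
proof -
  have "1 \<le> midx n" "midx n \<le> n" using midx_odd[OF od] by linarith+
  then show ?thesis unfolding Tmed_def by (rule in_V[OF ds])
qed

lemma V_dist: "a \<in> Vset m \<Longrightarrow> b \<in> Vset m \<Longrightarrow> \<bar>a - b\<bar> \<le> m"
  unfolding Vset_def by auto

lemma q_lower:
  assumes ds: "is_dataset m n x" and ctm: "CTM n x" and od: "odd n" and a: "a \<in> Vset m"
  shows "real (midx n - 1) * \<bar>a - Tmed x n\<bar> \<le> qloss x n a * m"
proof -
  have mpos: "m \<ge> 0" using a unfolding Vset_def by auto
  have aT: "\<bar>a - Tmed x n\<bar> \<le> m" using V_dist[OF a T_in_V[OF ds od]] .
  have "qloss x n a \<le> qloss x n a" by simp
  then have "real (midx n) \<le> qloss x n a \<or> (\<exists>i\<in>{1..n}. \<bar>real (midx n) - real i\<bar> \<le> qloss x n a \<and>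
            ((x i \<le> a \<and> a \<le> Tmed x n) \<or> (Tmed x n \<le> a \<and> a \<le> x i)))"
    using q_facts(1)[OF ds od] by blast
  then show ?thesis
  proof
    assume h: "real (midx n) \<le> qloss x n a"
    have "real (midx n - 1) * \<bar>a - Tmed x n\<bar> \<le> real (midx n) * m"
      using aT mpos by (intro mult_mono) auto
    also have "\<dots> \<le> qloss x n a * m" using h mpos by (rule mult_right_mono)
    finally show ?thesis .
  next
    assume "\<exists>i\<in>{1..n}. \<bar>real (midx n) - real i\<bar> \<le> qloss x n a \<and>
            ((x i \<le> a \<and> a \<le> Tmed x n) \<or> (Tmed x n \<le> a \<and> a \<le> x i))"
    then obtain i where i: "1 \<le> i" "i \<le> n" "\<bar>real (midx n) - real i\<bar> \<le> qloss x n a"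
      "(x i \<le> a \<and> a \<le> Tmed x n) \<or> (Tmed x n \<le> a \<and> a \<le> x i)" by auto
    have "\<bar>a - Tmed x n\<bar> \<le> \<bar>x i - Tmed x n\<bar>" using i(4) by auto
    then have "real (midx n - 1) * \<bar>a - Tmed x n\<bar> \<le> real (midx n - 1) * \<bar>x i - Tmed x n\<bar>"
      by (intro mult_left_mono) auto
    also have "\<dots> \<le> \<bar>real (midx n) - real i\<bar> * m" by (rule gap_bound[OF ds ctm od i(1,2)])
    also have "\<dots> \<le> qloss x n a * m" using i(3) mpos by (rule mult_right_mono)
    finally show ?thesis .
  qed
qed

lemma p_lower:
  assumes ds: "is_dataset m n x" and ctm: "CTM n x" and od: "odd n" and l: "l \<in> Vset m"
    and r: "\<alpha> * m \<ge> 0"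
  shows "real (midx n - 1) * (\<bar>l - Tmed x n\<bar> - \<alpha> * m) \<le> ploss m \<alpha> x n l * m"
proof -
  obtain a where a: "a \<in> Vset m" "\<bar>a - l\<bar> \<le> \<alpha> * m" "ploss m \<alpha> x n l = qloss x n a"
    using p_facts(1)[OF ds od l r] by blast
  have "\<bar>l - Tmed x n\<bar> - \<alpha> * m \<le> \<bar>a - Tmed x n\<bar>" using a(2) by linarith
  then have "real (midx n - 1) * (\<bar>l - Tmed x n\<bar> - \<alpha> * m) \<le> real (midx n - 1) * \<bar>a - Tmed x n\<bar>"
    by (intro mult_left_mono) auto
  also have "\<dots> \<le> ploss m \<alpha> x n l * m" unfolding a(3) by (rule q_lower[OF ds ctm od a(1)])
  finally show ?thesis .
qed

lemma p_zero:
  assumes ds: "is_dataset m n x" and od: "odd n" and l: "l \<in> Vset m"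
    and r: "\<alpha> * m \<ge> 0" and near: "\<bar>l - Tmed x n\<bar> \<le> \<alpha> * m"
  shows "ploss m \<alpha> x n l = 0"
proof -
  have k: "midx n \<in> {1..n}" using midx_odd[OF od] by auto
  have "qloss x n (Tmed x n) \<le> 0"
    using q_facts(1)[OF ds od, of "Tmed x n" 0] k by (auto simp: Tmed_def)
  moreover have "ploss m \<alpha> x n l \<le> qloss x n (Tmed x n)"
    using p_facts(2)[OF ds od l r T_in_V[OF ds od]] near by simp
  moreover have "ploss m \<alpha> x n l \<ge> 0" using p_val[OF ds od l r] by auto
  ultimately show ?thesis by linarith
qed

lemma FAIR_le:
  assumes "n \<ge> 1" shows "FAIR x n l \<le> \<bar>l - Tmed x n\<bar>"
  unfolding FAIR_def using assms by (subst Max_le_iff) auto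

lemma FAIR_set_meas: "{l. FAIR x n l \<le> R} \<in> sets borel"
proof -
  have "(\<lambda>l. FAIR x n l) \<in> borel_measurable borel"
    unfolding FAIR_def by (intro borel_measurable_Max) auto
  then show ?thesis by measurable
qed

lemma exp_right:
  fixes c a b w :: real
  assumes c: "c > 0" and w: "w \<ge> 0"
  shows "(\<integral>\<^sup>+ l. ennreal (indicator {a..a+w} l * exp (- c * (l - b))) \<partial>lborel) \<le> ennreal (exp (- c * (a - b)) / c)"
proof -
  define F where "F l = - exp (- c * (l - b)) / c" for l
  have "((\<lambda>l. exp (- c * (l - b))) has_integral (F (a+w) - F a)) {a..a+w}"
  proof (rule fundamental_theorem_of_calculus)
    show "a \<le> a + w" using w by simp
    fix l
    have "(F has_real_derivative exp (- c * (l - b))) (at l within {a..a+w})"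
      unfolding F_def using c by (auto intro!: derivative_eq_intros)
    then show "(F has_vector_derivative exp (- c * (l - b))) (at l within {a..a+w})"
      by (simp add: has_real_derivative_iff_has_vector_derivative)
  qed
  then have "(\<integral>\<^sup>+ l. ennreal (indicator {a..a+w} l * exp (- c * (l - b))) \<partial>lborel) = ennreal (F (a+w) - F a)"
    by (intro nn_integral_has_integral_lebesgue) auto
  also have "F (a+w) - F a \<le> exp (- c * (a - b)) / c" unfolding F_def using c by (simp add: field_simps)
  finally show ?thesis by (simp add: ennreal_leI)
qed

lemma exp_left:
  fixes c a b w :: real
  assumes c: "c > 0" and w: "w \<ge> 0"
  shows "(\<integral>\<^sup>+ l. ennreal (indicator {a-w..a} l * exp (c * (l - b))) \<partial>lborel) \<le> ennreal (exp (c * (a - b)) / c)"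
proof -
  define F where "F l = exp (c * (l - b)) / c" for l
  have "((\<lambda>l. exp (c * (l - b))) has_integral (F a - F (a-w))) {a-w..a}"
  proof (rule fundamental_theorem_of_calculus)
    show "a - w \<le> a" using w by simp
    fix l
    have "(F has_real_derivative exp (c * (l - b))) (at l within {a-w..a})"
      unfolding F_def using c by (auto intro!: derivative_eq_intros)
    then show "(F has_vector_derivative exp (c * (l - b))) (at l within {a-w..a})"
      by (simp add: has_real_derivative_iff_has_vector_derivative)
  qed
  then have "(\<integral>\<^sup>+ l. ennreal (indicator {a-w..a} l * exp (c * (l - b))) \<partial>lborel) = ennreal (F a - F (a-w))"
    by (intro nn_integral_has_integral_lebesgue) auto
  also have "F a - F (a-w) \<le> exp (c * (a - b)) / c" unfolding F_def using c by (simp add: field_simps)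
  finally show ?thesis by (simp add: ennreal_leI)
qed

lemma numeric:
  fixes L c r :: real
  assumes L: "L > 1" and c: "c > 0" and cr: "c * r \<ge> 1/6" and r: "r > 0"
  shows "2 * exp (- c * (60 * r * L - r)) / c \<le> exp (- L) * r"
proof -
  have ic: "1 / c \<le> 6 * r" using cr c by (simp add: field_simps)
  have "c * (60 * r * L - r) = (c * r) * (60 * L - 1)" by (simp add: algebra_simps)
  also have "\<dots> \<ge> (1/6) * (60 * L - 1)" using cr L by (intro mult_right_mono) auto
  finally have e1: "exp (- c * (60 * r * L - r)) \<le> exp (1/6 - 10 * L)" by simp
  have "exp (1/6::real) \<le> exp 1" by simp
  also have "exp 1 \<le> (3::real)" by (rule exp_le)
  finally have e6: "exp (1/6::real) \<le> 3" .
  have "(4::real) \<le> exp 3" using exp_ge_add_one_self[of 3] by simp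
  then have "(4::real)^3 \<le> exp 3 ^ 3" by (rule power_mono) simp
  also have "exp (3::real) ^ 3 = exp 9" by (simp flip: exp_of_nat_mult)
  also have "exp (9::real) \<le> exp (9 * L)" using L by simp
  finally have e9: "64 \<le> exp (9 * L)" by simp
  have "12 * exp (1/6 - 10 * L) = 12 * exp (1/6::real) * exp (- L) / exp (9 * L)"
    by (simp add: exp_diff exp_add exp_minus field_simps flip: exp_add)
  also have "\<dots> \<le> 36 * exp (- L) / exp (9 * L)" using e6 by (intro divide_right_mono mult_right_mono) auto
  also have "\<dots> \<le> 36 * exp (- L) / 64" using e9 by (intro divide_left_mono) auto
  also have "\<dots> \<le> exp (- L)" by simp
  finally have key: "12 * exp (1/6 - 10 * L) \<le> exp (- L)" .
  have "2 * exp (- c * (60 * r * L - r)) / c = 2 * exp (- c * (60 * r * L - r)) * (1 / c)" by simp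
  also have "\<dots> \<le> 2 * exp (1/6 - 10 * L) * (6 * r)" using e1 ic c by (intro mult_mono) auto
  also have "\<dots> = (12 * exp (1/6 - 10 * L)) * r" by simp
  also have "\<dots> \<le> exp (- L) * r" using key r by (intro mult_right_mono) auto
  finally show ?thesis .
qed

lemma main:
  fixes m \<beta> \<epsilon> :: real and n :: nat and x :: "nat \<Rightarrow> real"
  assumes m: "m > 0" and b0: "0 < \<beta>" and b1: "\<beta> < 1/3" and e0: "0 < \<epsilon>" and e1: "\<epsilon> < 1"
    and od: "odd n" and big: "real n * \<epsilon> \<ge> 3 * ln (1 / \<beta>)"
    and ds: "is_dataset m n x" and ctm: "CTM n x"
  shows "dpexpmed_prob m (1 / (real n * \<epsilon>)) \<epsilon> x n
         {l. FAIR x n l \<le> 60 * (m / (real n * \<epsilon>)) * ln (1 / \<beta>)} \<ge> 1 - \<beta>"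
proof -
  define L where "L = ln (1 / \<beta>)"
  have "\<beta> * exp 1 \<le> \<beta> * 3" using exp_le b0 by (intro mult_left_mono) auto
  then have "\<beta> * exp 1 < 1" using b1 by linarith
  then have "exp 1 < 1 / \<beta>" using b0 by (simp add: field_simps)
  then have "ln (exp 1) < ln (1 / \<beta>)" using b0 by (subst ln_less_cancel_iff) auto
  then have L1: "L > 1" by (simp add: L_def)
  have bL: "exp (- L) = \<beta>" using b0 by (simp add: L_def ln_div exp_minus)
  have ne3: "real n * \<epsilon> > 3" using big L1 by (simp add: L_def)
  have n0: "real n > 0" using ne3 by (cases n) auto
  have "real n * \<epsilon> < real n" using mult_strict_left_mono[OF e1 n0] by simp
  then have n3: "n \<ge> 3" using ne3 by linarith
  obtain k where km: "midx n = k" by blast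
  have nk: "n = 2*k - 1" "k \<ge> 1" using midx_odd[OF od] km by auto
  have k2: "k \<ge> 2" using nk n3 by linarith
  have "real (k - 1) = real k - 1" using k2 by (simp add: of_nat_diff)
  moreover have "real n = 2 * real k - 1" using nk k2 by (simp add: of_nat_diff)
  ultimately have k1: "real (k - 1) \<ge> real n / 3" using k2 by simp
  define \<alpha> where "\<alpha> = 1 / (real n * \<epsilon>)"
  define r where "r = \<alpha> * m"
  have npos: "real n * \<epsilon> > 0" using ne3 by simp
  have r0: "r > 0" unfolding r_def \<alpha>_def using npos m by simp
  have "m / (real n * \<epsilon>) \<le> m / 2" using m ne3 by (intro divide_left_mono) auto
  then have rm: "r \<le> m / 2" unfolding r_def \<alpha>_def by simp
  have rr: "\<alpha> * m \<ge> 0" using r0 r_def by simp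
  define T where "T = Tmed x n"
  have TV: "T \<in> Vset m" unfolding T_def by (rule T_in_V[OF ds od])
  define c where "c = \<epsilon> * real (k - 1) / (2 * m)"
  have c0: "c > 0" unfolding c_def using e0 m k2 by simp
  have cr: "c * r \<ge> 1/6"
  proof -
    have "c * r = \<epsilon> * real (k - 1) / (2 * m) * (m / (real n * \<epsilon>))" unfolding c_def r_def \<alpha>_def by simp
    also have "\<dots> = real (k - 1) / (2 * real n)" using m e0 by (simp add: field_simps)
    also have "\<dots> \<ge> (real n / 3) / (2 * real n)" using k1 n3 by (intro divide_right_mono) auto
    also have "(real n / 3) / (2 * real n) = 1/6" using n3 by simp
    finally show ?thesis by simp
  qed
  define R where "R = 60 * (m / (real n * \<epsilon>)) * ln (1 / \<beta>)"
  have Rr: "R = 60 * r * L" unfolding R_def r_def \<alpha>_def L_def by simp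
  have R0: "R \<ge> r" unfolding Rr using r0 L1 by simp
  define F where "F l = indicator (Vset m) l * exp (- (\<epsilon> / 2) * ploss m \<alpha> x n l)" for l
  have Fm: "F \<in> borel_measurable borel"
  proof -
    have "F = (\<lambda>l. indicator (Vset m) l * exp (- (\<epsilon> / 2) * (\<Sum>j<midx n. indicator (- Sset m \<alpha> x n j) l)))"
      unfolding F_def by (intro ext dens_eq[OF ds od rr])
    then show ?thesis using dens_meas[OF ds od rr] by simp
  qed
  have F0: "F l \<ge> 0" for l by (simp add: F_def)
  define M where "M = expmed_measure m \<alpha> \<epsilon> x n"
  have M: "M = density lborel (\<lambda>l. ennreal (F l))" unfolding M_def expmed_measure_def F_def by simp
  have sM: "sets M = sets borel" unfolding M by simp
  have em: "emeasure M A = (\<integral>\<^sup>+ l. ennreal (F l) * indicator A l \<partial>lborel)" if "A \<in> sets borel" for A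
    unfolding M using Fm that by (subst emeasure_density) auto
  have VB: "Vset m \<in> sets borel" by (simp add: Vset_def)
  have p0: "ploss m \<alpha> x n l \<ge> 0" if "l \<in> Vset m" for l
    using p_val[OF ds od that rr] by auto
  have FV: "ennreal (F l) \<le> indicator (Vset m) l" for l
  proof (cases "l \<in> Vset m")
    case True
    then have "F l \<le> 1" using p0[OF True] e0 by (simp add: F_def)
    then show ?thesis using True by (simp add: ennreal_leI)
  qed (simp add: F_def)
  have finM: "emeasure M (space M) \<noteq> \<infinity>"
  proof -
    have "space M = UNIV" unfolding M by simp
    then have "emeasure M (space M) = (\<integral>\<^sup>+ l. ennreal (F l) \<partial>lborel)" using em[of UNIV] by simp
    also have "\<dots> \<le> (\<integral>\<^sup>+ l. indicator (Vset m) l \<partial>lborel)" by (intro nn_integral_mono FV)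
    also have "\<dots> = emeasure lborel (Vset m)" using VB by simp
    also have "\<dots> < \<infinity>" unfolding Vset_def using m by simp
    finally show ?thesis by simp
  qed
  interpret fm: finite_measure M by (rule finite_measureI[OF finM])
  define I where "I = (if T \<ge> 0 then {T - r..T} else {T..T + r})"
  have TV': "-m/2 \<le> T" "T \<le> m/2" using TV unfolding Vset_def by auto
  have IV: "I \<subseteq> Vset m"
  proof (cases "T \<ge> 0")
    case True
    have "{T - r..T} \<subseteq> {-m/2..m/2}" using True TV' rm by (subst atLeastatMost_subset_iff) auto
    then show ?thesis using True unfolding I_def Vset_def by simp
  next
    case False
    have "{T..T + r} \<subseteq> {-m/2..m/2}" using False TV' rm by (subst atLeastatMost_subset_iff) auto
    then show ?thesis using False unfolding I_def Vset_def by simp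
  qed
  have IT: "\<bar>l - T\<bar> \<le> r" if "l \<in> I" for l
  proof (cases "T \<ge> 0")
    case True then show ?thesis using that unfolding I_def by simp
  next
    case False then show ?thesis using that unfolding I_def by simp
  qed
  have FI: "F l = 1" if "l \<in> I" for l
  proof -
    have l: "l \<in> Vset m" using IV that by blast
    have "ploss m \<alpha> x n l = 0"
      by (rule p_zero[OF ds od l rr]) (use IT[OF that] in \<open>simp add: T_def r_def\<close>)
    then show ?thesis using l by (simp add: F_def)
  qed
  have IB: "I \<in> sets borel" unfolding I_def by simp
  have "emeasure lborel I = ennreal r" unfolding I_def using r0 by simp
  then have "ennreal r = (\<integral>\<^sup>+ l. indicator I l \<partial>lborel)" using IB by simp
  also have "\<dots> \<le> (\<integral>\<^sup>+ l. ennreal (F l) * indicator (Vset m) l \<partial>lborel)"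
  proof (intro nn_integral_mono)
    fix l show "indicator I l \<le> ennreal (F l) * indicator (Vset m) l"
    proof (cases "l \<in> I")
      case True then show ?thesis using FI[OF True] IV by auto
    qed simp
  qed
  also have "\<dots> = emeasure M (Vset m)" using em[OF VB] by simp
  also have "\<dots> = ennreal (measure M (Vset m))" by (rule fm.emeasure_eq_measure)
  finally have Zr: "r \<le> measure M (Vset m)" using r0 by (simp add: ennreal_le_iff)
  define G where "G = {l. FAIR x n l \<le> R}"
  define B where "B = Vset m - G"
  have GB: "G \<in> sets borel" unfolding G_def by (rule FAIR_set_meas)
  have BB: "B \<in> sets borel" unfolding B_def using GB VB by auto
  define g1 where "g1 l = ennreal (indicator {T+R..T+R+m} l * exp (- c * (l - (T + r))))" for l
  define g2 where "g2 l = ennreal (indicator {T-R-m..T-R} l * exp (c * (l - (T - r))))" for l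
  have pt: "ennreal (F l) * indicator B l \<le> g1 l + g2 l" for l
  proof (cases "l \<in> B")
    case False then show ?thesis by simp
  next
    case True
    then have lV: "l \<in> Vset m" and lG: "\<not> FAIR x n l \<le> R" unfolding B_def G_def by auto
    have far: "\<bar>l - T\<bar> > R" using lG FAIR_le[of n x l] n3 unfolding T_def by linarith
    have lm: "\<bar>l - T\<bar> \<le> m" by (rule V_dist[OF lV TV])
    have pl: "real (k - 1) * (\<bar>l - T\<bar> - r) \<le> ploss m \<alpha> x n l * m"
      using p_lower[OF ds ctm od lV rr] unfolding km T_def r_def .
    have "c * (\<bar>l - T\<bar> - r) = (\<epsilon> / (2 * m)) * (real (k - 1) * (\<bar>l - T\<bar> - r))"
      unfolding c_def by (simp add: field_simps)
    also have "\<dots> \<le> (\<epsilon> / (2 * m)) * (ploss m \<alpha> x n l * m)"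
      using pl e0 m by (intro mult_left_mono) auto
    also have "\<dots> = (\<epsilon> / 2) * ploss m \<alpha> x n l" using m by (simp add: field_simps)
    finally have pc: "c * (\<bar>l - T\<bar> - r) \<le> (\<epsilon> / 2) * ploss m \<alpha> x n l" .
    have Fl: "F l \<le> exp (- c * (\<bar>l - T\<bar> - r))" using pc lV by (simp add: F_def)
    show ?thesis
    proof (cases "l > T")
      case True
      then have "l \<in> {T+R..T+R+m}" using far lm R0 r0 by auto
      then have ind: "indicator {T+R..T+R+m} l = (1::real)" by simp
      have e0: "- c * (\<bar>l - T\<bar> - r) = - c * (l - (T + r))" using True by simp
      have "F l \<le> exp (- c * (l - (T + r)))" using Fl by (simp only: e0)
      then have "F l \<le> indicator {T+R..T+R+m} l * exp (- c * (l - (T + r)))" unfolding ind by simp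
      then have "ennreal (F l) \<le> g1 l" unfolding g1_def by (rule ennreal_leI)
      then show ?thesis using \<open>l \<in> B\<close> by (simp add: add_increasing2)
    next
      case False
      then have "l \<in> {T-R-m..T-R}" using far lm R0 r0 by auto
      then have ind: "indicator {T-R-m..T-R} l = (1::real)" by simp
      have e0: "- c * (\<bar>l - T\<bar> - r) = c * (l - (T - r))" using False by (simp add: algebra_simps)
      have "F l \<le> exp (c * (l - (T - r)))" using Fl by (simp only: e0)
      then have "F l \<le> indicator {T-R-m..T-R} l * exp (c * (l - (T - r)))" unfolding ind by simp
      then have "ennreal (F l) \<le> g2 l" unfolding g2_def by (rule ennreal_leI)
      then show ?thesis using \<open>l \<in> B\<close> by (simp add: add_increasing)
    qed
  qed
  define E where "E = exp (- c * (R - r)) / c"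
  have E0: "E \<ge> 0" unfolding E_def using c0 by simp
  have i1: "(\<integral>\<^sup>+ l. g1 l \<partial>lborel) \<le> ennreal E"
  proof -
    have "exp (- c * ((T + R) - (T + r))) / c = E" unfolding E_def by (simp add: algebra_simps)
    then show ?thesis unfolding g1_def using exp_right[OF c0, of m "T + R" "T + r"] m by simp
  qed
  have i2: "(\<integral>\<^sup>+ l. g2 l \<partial>lborel) \<le> ennreal E"
  proof -
    have "exp (c * ((T - R) - (T - r))) / c = E" unfolding E_def by (simp add: algebra_simps)
    moreover have "T - R - m = (T - R) - m" by simp
    ultimately show ?thesis unfolding g2_def using exp_left[OF c0, of m "T - R" "T - r"] m by simp
  qed
  have "emeasure M B = (\<integral>\<^sup>+ l. ennreal (F l) * indicator B l \<partial>lborel)" by (rule em[OF BB])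
  also have "\<dots> \<le> (\<integral>\<^sup>+ l. g1 l + g2 l \<partial>lborel)" by (intro nn_integral_mono pt)
  also have "\<dots> = (\<integral>\<^sup>+ l. g1 l \<partial>lborel) + (\<integral>\<^sup>+ l. g2 l \<partial>lborel)"
    unfolding g1_def g2_def by (intro nn_integral_add) auto
  also have "\<dots> \<le> ennreal E + ennreal E" by (rule add_mono[OF i1 i2])
  also have "\<dots> = ennreal (2 * E)" using E0 by (simp flip: ennreal_plus)
  finally have "emeasure M B \<le> ennreal (2 * E)" .
  then have "measure M B \<le> 2 * E"
    using fm.emeasure_eq_measure E0 by (simp add: ennreal_le_iff)
  then have bad: "measure M B \<le> 2 * exp (- c * (R - r)) / c" unfolding E_def by simp
  have badb: "2 * exp (- c * (R - r)) / c \<le> \<beta> * r"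
    using numeric[OF L1 c0 cr r0] unfolding Rr bL by simp
  have GM: "G \<in> sets M" using GB sM by simp
  have BM: "B \<in> sets M" using BB sM by simp
  have "Vset m \<subseteq> G \<union> B" unfolding B_def by blast
  moreover have "G \<union> B \<in> sets M" using GM BM by (rule sets.Un)
  ultimately have "measure M (Vset m) \<le> measure M (G \<union> B)" by (rule fm.finite_measure_mono)
  also have "\<dots> \<le> measure M G + measure M B" using GM BM fm.emeasure_finite by (intro measure_subadditive) auto
  finally have sub: "measure M (Vset m) \<le> measure M G + measure M B" .
  have Zpos: "measure M (Vset m) > 0" using Zr r0 by linarith
  have "1 - \<beta> \<le> measure M G / measure M (Vset m)"
  proof -
    have "\<beta> * r \<le> \<beta> * measure M (Vset m)" using Zr b0 by (intro mult_left_mono) auto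
    then have "(1 - \<beta>) * measure M (Vset m) \<le> measure M G" using sub bad badb by (simp add: algebra_simps)
    then show ?thesis using Zpos by (simp add: field_simps)
  qed
  then show ?thesis unfolding dpexpmed_prob_def M_def[symmetric] \<alpha>_def[symmetric] G_def R_def .
qed

theorem theorem7p12:
  shows "\<exists>C C' :: real. C > 0 \<and> C' > 0 \<and>
    (\<forall>(m::real) (\<beta>::real) (\<epsilon>::real) (n::nat) (x::nat \<Rightarrow> real).
       m > 0 \<longrightarrow> 0 < \<beta> \<longrightarrow> \<beta> < 1/3 \<longrightarrow> 0 < \<epsilon> \<longrightarrow> \<epsilon> < 1 \<longrightarrow>
       odd n \<longrightarrow> real n * \<epsilon> \<ge> C * ln (1 / \<beta>) \<longrightarrow>
       is_dataset m n x \<longrightarrow> CTM n x \<longrightarrow>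
       dpexpmed_prob m (1 / (real n * \<epsilon>)) \<epsilon> x n
         {l. FAIR x n l \<le> C' * (m / (real n * \<epsilon>)) * ln (1 / \<beta>)} \<ge> 1 - \<beta>)"
  apply (rule exI[of _ "3::real"], rule exI[of _ "60::real"])
  apply (intro conjI)
    apply simp
   apply simp
  apply (intro allI impI)
  apply (rule main; assumption)
  done

end
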